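(* Let $\mathcal{A}$ be a unital algebra generated by two unital subalgebras $\mathcal{A}_1,\mathcal{A}_2$. Let $T\subset \mathbb{R}$ be such that $0$ is an accumulation point of $T$, let $(\tau_t)_{t\in T}$ be unital linear functionals on $\mathcal{A}$, and let $\mathcal{I}_1$ (resp. $\mathcal{I}_2$) be an ideal of $\mathcal{A}_1$ (resp. $\mathcal{A}_2$) such that: $\mathcal{A}_1$ and $\mathcal{A}_2$ are free with respect to $\tau_t$ up to order $o(t)$; there exists $\tau: \mathcal{A}_1\cup \mathcal{A}_2 \to \mathbb{C}$ such that $\tau_t(a)=\tau(a)+o(t)$ as $t\to0$ for all $a\in \mathcal{A}_1\cup \mathcal{A}_2$; there exists $\tau': \mathcal{I}_1\cup \mathcal{I}_2 \to \mathbb{C}$ such that $\tau_t(a)=t\,\tau'(a)+o(t)$ as $t\to0$ for all $a \in \mathcal{I}_1\cup \mathcal{I}_2$. Let $\mathcal{I}$ be the ideal of $\mathcal{A}$ generated by $\mathcal{I}_1\cup \mathcal{I}_2$. Then $\tau$ extends to a linear functional on $\mathcal{A}$ and $\tau'$ to a linear functional on $\mathcal{I}$ such that, as $t\to 0$, $\tau_t(a)= \tau(a)+o(1)$ for all $a\in \mathcal{A}$ and $\tau_t(a)= t\, \tau'(a)+o(t)$ for all $a\in \mathcal{I}$. Moreover, $(\mathcal{A}_1,\mathcal{I}_1)$ and $(\mathcal{A}_2,\mathcal{I}_2)$ are free of type $B$ in $(\mathcal{A},\tau,\mathcal{I},\tau')$.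
   Context: Freeness up to order $o(t)$: whenever $a_1\in\mathcal{A}_{i_1},\dots,a_n\in\mathcal{A}_{i_n}$ with consecutive indices different, $\tau_t((a_1-\tau_t(a_1))\cdots(a_n-\tau_t(a_n)))=o(t)$. Freeness of type $B$ in $(\mathcal{A},\tau,\mathcal{I},\tau')$ for $(\mathcal{A}_1,\mathcal{I}_1)$, $(\mathcal{A}_2,\mathcal{I}_2)$: $\mathcal{A}_1,\mathcal{A}_2$ are free w.r.t. $\tau$, and whenever $a_n\in\mathcal{A}_{i_n},\dots,a_1\in\mathcal{A}_{i_1}$, $v\in\mathcal{I}_h$, $b_1\in\mathcal{A}_{j_1},\dots,b_m\in\mathcal{A}_{j_m}$ with any two consecutive indices in $i_n,\dots,i_1,h,j_1,\dots,j_m$ different and all $a_r,b_s$ centered for $\tau$, $\tau'(a_n\cdots a_1vb_1\cdots b_m)=\tau(a_nb_m)\cdots\tau(a_1b_1)\tau'(v)$ if $n=m$ and $i_r=j_r$ for all $r$, and $=0$ otherwise. *)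

theory Defs
  imports "HOL-Analysis.Analysis" "HOL-Library.Landau_Symbols"
begin

definition complex_algebra :: "(complex \<Rightarrow> 'a::ring_1 \<Rightarrow> 'a) \<Rightarrow> bool" where
  "complex_algebra sc \<longleftrightarrow> module sc \<and>
     (\<forall>c x y. sc c (x * y) = sc c x * y \<and> sc c (x * y) = x * sc c y)"

definition unital_subalgebra :: "(complex \<Rightarrow> 'a::ring_1 \<Rightarrow> 'a) \<Rightarrow> 'a set \<Rightarrow> bool" where
  "unital_subalgebra sc B \<longleftrightarrow> 1 \<in> B \<and>
     (\<forall>x\<in>B. \<forall>y\<in>B. x + y \<in> B \<and> x * y \<in> B) \<and> (\<forall>c. \<forall>x\<in>B. sc c x \<in> B)"

definition subalgebra_hull :: "(complex \<Rightarrow> 'a::ring_1 \<Rightarrow> 'a) \<Rightarrow> 'a set \<Rightarrow> 'a set" where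
  "subalgebra_hull sc S = \<Inter>{B. unital_subalgebra sc B \<and> S \<subseteq> B}"

definition ideal_of :: "(complex \<Rightarrow> 'a::ring_1 \<Rightarrow> 'a) \<Rightarrow> 'a set \<Rightarrow> 'a set \<Rightarrow> bool" where
  "ideal_of sc B J \<longleftrightarrow> J \<subseteq> B \<and> 0 \<in> J \<and>
     (\<forall>x\<in>J. \<forall>y\<in>J. x + y \<in> J) \<and> (\<forall>c. \<forall>x\<in>J. sc c x \<in> J) \<and>
     (\<forall>a\<in>B. \<forall>x\<in>J. a * x \<in> J \<and> x * a \<in> J)"

definition ideal_hull :: "(complex \<Rightarrow> 'a::ring_1 \<Rightarrow> 'a) \<Rightarrow> 'a set \<Rightarrow> 'a set" where
  "ideal_hull sc S = \<Inter>{J. ideal_of sc UNIV J \<and> S \<subseteq> J}"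

definition linear_functional_on ::
    "(complex \<Rightarrow> 'a::ring_1 \<Rightarrow> 'a) \<Rightarrow> 'a set \<Rightarrow> ('a \<Rightarrow> complex) \<Rightarrow> bool" where
  "linear_functional_on sc D f \<longleftrightarrow>
     (\<forall>x\<in>D. \<forall>y\<in>D. f (x + y) = f x + f y) \<and> (\<forall>c. \<forall>x\<in>D. f (sc c x) = c * f x)"

definition pick :: "nat \<Rightarrow> 'b \<Rightarrow> 'b \<Rightarrow> 'b" where
  "pick i X1 X2 = (if i = 1 then X1 else X2)"

definition alternating :: "nat list \<Rightarrow> bool" where
  "alternating is \<longleftrightarrow> (\<forall>k. Suc k < length is \<longrightarrow> is ! k \<noteq> is ! Suc k)"

definition admissible :: "'a set \<Rightarrow> 'a set \<Rightarrow> (nat \<times> 'a) list \<Rightarrow> bool" where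
  "admissible A1 A2 xs \<longleftrightarrow> (\<forall>(i, a) \<in> set xs. i \<in> {1, 2} \<and> a \<in> pick i A1 A2) \<and>
     alternating (map fst xs)"

definition centered_prod ::
    "(complex \<Rightarrow> 'a::ring_1 \<Rightarrow> 'a) \<Rightarrow> ('a \<Rightarrow> complex) \<Rightarrow> (nat \<times> 'a) list \<Rightarrow> 'a" where
  "centered_prod sc phi xs = prod_list (map (\<lambda>(i, a). a - sc (phi a) 1) xs)"

definition free_wrt ::
    "(complex \<Rightarrow> 'a::ring_1 \<Rightarrow> 'a) \<Rightarrow> ('a \<Rightarrow> complex) \<Rightarrow> 'a set \<Rightarrow> 'a set \<Rightarrow> bool" where
  "free_wrt sc phi A1 A2 \<longleftrightarrow>
     (\<forall>xs. xs \<noteq> [] \<and> admissible A1 A2 xs \<longrightarrow> phi (centered_prod sc phi xs) = 0)"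

definition free_up_to_o_t ::
    "(complex \<Rightarrow> 'a::ring_1 \<Rightarrow> 'a) \<Rightarrow> real set \<Rightarrow> (real \<Rightarrow> 'a \<Rightarrow> complex) \<Rightarrow> 'a set \<Rightarrow> 'a set \<Rightarrow> bool" where
  "free_up_to_o_t sc T tau A1 A2 \<longleftrightarrow>
     (\<forall>xs. xs \<noteq> [] \<and> admissible A1 A2 xs \<longrightarrow>
        (\<lambda>t. tau t (centered_prod sc (tau t) xs)) \<in> o[at 0 within T](\<lambda>t. complex_of_real t))"

text \<open>Freeness of type B of (A1,I1), (A2,I2) in (A, phi, I, phi').  The list as = [(i_1,a_1),...,(i_n,a_n)]
  encodes a_n ... a_1 (closest to v first), bs = [(j_1,b_1),...,(j_m,b_m)] encodes b_1 ... b_m.\<close>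
definition free_type_B ::
    "(complex \<Rightarrow> 'a::ring_1 \<Rightarrow> 'a) \<Rightarrow> ('a \<Rightarrow> complex) \<Rightarrow> ('a \<Rightarrow> complex) \<Rightarrow>
     'a set \<Rightarrow> 'a set \<Rightarrow> 'a set \<Rightarrow> 'a set \<Rightarrow> bool" where
  "free_type_B sc phi phi' A1 I1 A2 I2 \<longleftrightarrow>
     free_wrt sc phi A1 A2 \<and>
     (\<forall>as bs h v.
        h \<in> {1, 2} \<and> v \<in> pick h I1 I2 \<and>
        (\<forall>(i, a) \<in> set as. i \<in> {1, 2} \<and> a \<in> pick i A1 A2 \<and> phi a = 0) \<and>
        (\<forall>(j, b) \<in> set bs. j \<in> {1, 2} \<and> b \<in> pick j A1 A2 \<and> phi b = 0) \<and>
        alternating (rev (map fst as) @ [h] @ map fst bs) \<longrightarrow>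
        phi' (prod_list (rev (map snd as)) * v * prod_list (map snd bs)) =
          (if map fst as = map fst bs
           then (\<Prod>(a, b) \<leftarrow> zip (map snd as) (map snd bs). phi (a * b)) * phi' v
           else 0))"

end

theory Submission
  imports Defs
begin



definition Elim :: "real set \<Rightarrow> (real \<Rightarrow> complex) \<Rightarrow> complex \<Rightarrow> bool" where
  "Elim T f c \<longleftrightarrow> ((\<lambda>t. (f t - c) / complex_of_real t) \<longlongrightarrow> 0) (at 0 within T)"

definition Dlim :: "real set \<Rightarrow> (real \<Rightarrow> complex) \<Rightarrow> complex \<Rightarrow> bool" where
  "Dlim T f d \<longleftrightarrow> ((\<lambda>t. f t / complex_of_real t) \<longlongrightarrow> d) (at 0 within T)"

lemma ev_nz: "eventually (\<lambda>t. t \<noteq> 0) (at (0::real) within T)"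
  by (simp add: eventually_at_filter)

lemma ev_T: "eventually (\<lambda>t. t \<in> T) (at (0::real) within T)"
  by (simp add: eventually_at_filter)

lemma t_tendsto: "((\<lambda>t. complex_of_real t) \<longlongrightarrow> 0) (at (0::real) within T)"
proof -
  have "((\<lambda>t. complex_of_real t) \<longlongrightarrow> complex_of_real 0) (at (0::real) within T)"
    by (intro tendsto_intros)
  then show ?thesis by simp
qed

lemma Elim_tendsto:
  assumes "Elim T f c" shows "(f \<longlongrightarrow> c) (at 0 within T)"
proof -
  have "((\<lambda>t. c + ((f t - c) / complex_of_real t) * complex_of_real t) \<longlongrightarrow> c + 0 * 0) (at 0 within T)"
    using assms t_tendsto unfolding Elim_def by (intro tendsto_intros)
  moreover have "eventually (\<lambda>t. c + ((f t - c) / complex_of_real t) * complex_of_real t = f t) (at 0 within T)"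
    using ev_nz[of T] by eventually_elim simp
  ultimately show ?thesis by (simp add: tendsto_cong)
qed

lemma Elim_cong: "eventually (\<lambda>t. f t = g t) (at 0 within T) \<Longrightarrow> Elim T f c \<Longrightarrow> Elim T g c"
  unfolding Elim_def
  by (rule tendsto_cong[THEN iffD1, rotated]) (auto elim: eventually_mono)

lemma Dlim_cong: "eventually (\<lambda>t. f t = g t) (at 0 within T) \<Longrightarrow> Dlim T f c \<Longrightarrow> Dlim T g c"
  unfolding Dlim_def
  by (rule tendsto_cong[THEN iffD1, rotated]) (auto elim: eventually_mono)

lemma Elim_const: "Elim T (\<lambda>_. c) c"
  by (simp add: Elim_def)

lemma Dlim_zero: "Dlim T (\<lambda>_. 0) 0"
  by (simp add: Dlim_def)

lemma Elim_add: "Elim T f c \<Longrightarrow> Elim T g d \<Longrightarrow> Elim T (\<lambda>t. f t + g t) (c + d)"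
proof -
  assume a: "Elim T f c" "Elim T g d"
  have "((\<lambda>t. (f t - c) / complex_of_real t + (g t - d) / complex_of_real t) \<longlongrightarrow> 0 + 0) (at 0 within T)"
    using a unfolding Elim_def by (intro tendsto_intros)
  then show ?thesis unfolding Elim_def by (simp add: add_divide_distrib[symmetric] algebra_simps)
qed

lemma Elim_cmult: "Elim T f c \<Longrightarrow> Elim T (\<lambda>t. k * f t) (k * c)"
proof -
  assume a: "Elim T f c"
  have "((\<lambda>t. k * ((f t - c) / complex_of_real t)) \<longlongrightarrow> k * 0) (at 0 within T)"
    using a unfolding Elim_def by (intro tendsto_intros)
  then show ?thesis unfolding Elim_def by (simp add: algebra_simps)
qed

lemma Elim_diff: "Elim T f c \<Longrightarrow> Elim T g d \<Longrightarrow> Elim T (\<lambda>t. f t - g t) (c - d)"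
proof -
  assume a: "Elim T f c" "Elim T g d"
  have "Elim T (\<lambda>t. f t + (-1) * g t) (c + (-1) * d)"
    by (intro Elim_add Elim_cmult a)
  then show ?thesis by simp
qed

lemma Elim_mult: "Elim T f c \<Longrightarrow> Elim T g d \<Longrightarrow> Elim T (\<lambda>t. f t * g t) (c * d)"
proof -
  assume a: "Elim T f c" "Elim T g d"
  have "((\<lambda>t. ((f t - c) / complex_of_real t) * g t + c * ((g t - d) / complex_of_real t)) \<longlongrightarrow> 0 * d + c * 0) (at 0 within T)"
    using a Elim_tendsto[OF a(2)] unfolding Elim_def by (intro tendsto_intros)
  moreover have "\<And>t. ((f t - c) / complex_of_real t) * g t + c * ((g t - d) / complex_of_real t)
     = (f t * g t - c * d) / complex_of_real t"
  proof -
    fix t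
    have "((f t - c) / complex_of_real t) * g t + c * ((g t - d) / complex_of_real t)
       = ((f t - c) * g t + c * (g t - d)) / complex_of_real t"
      by (simp add: add_divide_distrib)
    also have "(f t - c) * g t + c * (g t - d) = f t * g t - c * d" by (simp add: algebra_simps)
    finally show "((f t - c) / complex_of_real t) * g t + c * ((g t - d) / complex_of_real t)
     = (f t * g t - c * d) / complex_of_real t" .
  qed
  ultimately show ?thesis unfolding Elim_def by simp
qed

lemma Dlim_add: "Dlim T f c \<Longrightarrow> Dlim T g d \<Longrightarrow> Dlim T (\<lambda>t. f t + g t) (c + d)"
  unfolding Dlim_def by (drule (1) tendsto_add) (simp add: add_divide_distrib)

lemma Dlim_cmult: "Dlim T f c \<Longrightarrow> Dlim T (\<lambda>t. k * f t) (k * c)"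
  unfolding Dlim_def by (drule tendsto_mult_left[of _ _ _ k]) simp

lemma Dlim_diff: "Dlim T f c \<Longrightarrow> Dlim T g d \<Longrightarrow> Dlim T (\<lambda>t. f t - g t) (c - d)"
  unfolding Dlim_def by (drule (1) tendsto_diff) (simp add: diff_divide_distrib)

lemma Dlim_mult_E: "Dlim T f d \<Longrightarrow> Elim T g c \<Longrightarrow> Dlim T (\<lambda>t. f t * g t) (d * c)"
  unfolding Dlim_def by (drule Elim_tendsto) (drule (1) tendsto_mult, simp)

lemma E_mult_Dlim: "Elim T f c \<Longrightarrow> Dlim T g d \<Longrightarrow> Dlim T (\<lambda>t. f t * g t) (c * d)"
  using Dlim_mult_E[of T g d f c] by (simp add: mult.commute)

lemma E0_D: "Elim T f 0 \<Longrightarrow> Dlim T f 0"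
  by (simp add: Elim_def Dlim_def)

lemma Elim_unique: "0 islimpt T \<Longrightarrow> Elim T f c \<Longrightarrow> Elim T f d \<Longrightarrow> c = d"
  by (metis Elim_tendsto tendsto_unique trivial_limit_within)

lemma Dlim_unique: "0 islimpt T \<Longrightarrow> Dlim T f c \<Longrightarrow> Dlim T f d \<Longrightarrow> c = d"
  unfolding Dlim_def by (metis tendsto_unique trivial_limit_within)




definition Q :: "(complex \<Rightarrow> 'a::ring_1 \<Rightarrow> 'a) \<Rightarrow> real \<Rightarrow> (nat \<times> 'a \<times> (real \<Rightarrow> complex)) list \<Rightarrow> 'a" where
  "Q sc t L = prod_list (map (\<lambda>(i, a, s). a - sc (s t) 1) L)"

lemma Q_simps[simp]: "Q sc t [] = 1" "Q sc t (x # L) = (fst (snd x) - sc (snd (snd x) t) 1) * Q sc t L"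
  "Q sc t (L @ M) = Q sc t L * Q sc t M"
  by (auto simp: Q_def split: prod.splits)

fun alt :: "nat list \<Rightarrow> bool" where
  "alt [] = True" | "alt [x] = True" | "alt (x # y # zs) = (x \<noteq> y \<and> alt (y # zs))"

lemma alternating_alt: "alternating xs = alt xs"
proof (induction xs rule: alt.induct)
  case 1 then show ?case by (simp add: alternating_def)
next
  case (2 x) then show ?case by (simp add: alternating_def)
next
  case (3 x y zs)
  have h1: "x \<noteq> y" if "alternating (x # y # zs)"
    using that unfolding alternating_def by (auto dest: spec[of _ 0])
  have h2: "alternating (y # zs)" if "alternating (x # y # zs)"
    unfolding alternating_def
  proof (intro allI impI)
    fix k assume "Suc k < length (y # zs)"
    then show "(y # zs) ! k \<noteq> (y # zs) ! Suc k"
      using that unfolding alternating_def by (auto dest: spec[of _ "Suc k"])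
  qed
  have h3: "alternating (x # y # zs)" if "x \<noteq> y" "alternating (y # zs)"
    unfolding alternating_def
  proof (intro allI impI)
    fix k assume k: "Suc k < length (x # y # zs)"
    show "(x # y # zs) ! k \<noteq> (x # y # zs) ! Suc k"
    proof (cases k)
      case 0 then show ?thesis using that by simp
    next
      case (Suc j) then show ?thesis using that k unfolding alternating_def by auto
    qed
  qed
  have "alternating (x # y # zs) \<longleftrightarrow> x \<noteq> y \<and> alternating (y # zs)"
    using h1 h2 h3 by blast
  with 3 show ?case by simp
qed

lemma alt_append: "alt (xs @ y # ys) \<longleftrightarrow> alt (xs @ [y]) \<and> alt (y # ys)"
proof (induction xs rule: alt.induct)
  case 1 then show ?case by simp
next
  case (2 x) then show ?case by (cases ys) auto
next
  case (3 x z zs) then show ?case by auto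
qed

lemma alt_ConsD: "alt (x # xs) \<Longrightarrow> alt xs"
  by (cases xs) auto

lemma alt_snocD: "alt (xs @ [x]) \<Longrightarrow> alt xs"
  by (induction xs rule: alt.induct) auto

lemma nonalt_split:
  assumes "\<not> alt (map fst L)"
  shows "\<exists>pre x y post. L = pre @ x # y # post \<and> fst x = fst y"
  using assms
proof (induction L)
  case Nil then show ?case by simp
next
  case (Cons x L)
  show ?case
  proof (cases L)
    case Nil with Cons show ?thesis by simp
  next
    case (Cons y R)
    show ?thesis
    proof (cases "fst x = fst y")
      case True then show ?thesis using Cons by (intro exI[of _ "[]"]) auto
    next
      case False
      with Cons.prems Cons have "\<not> alt (map fst L)" by simp
      from Cons.IH[OF this] obtain pre u v post where "L = pre @ u # v # post" "fst u = fst v" by blast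
      then show ?thesis by (intro exI[of _ "x # pre"]) auto
    qed
  qed
qed




lemma Q_remove:
  assumes alg: "complex_algebra sc"
  shows "Q sc t (pre @ (i, a, s) # post) = Q sc t (pre @ (i, a, s') # post) + sc (s' t - s t) (Q sc t (pre @ post))"
proof -
  interpret m: module sc using alg by (simp add: complex_algebra_def)
  have ml: "sc c (x * y) = sc c x * y" and mr: "sc c (x * y) = x * sc c y" for c x y
    using alg unfolding complex_algebra_def by blast+
  let ?P = "Q sc t pre" and ?R = "Q sc t post"
  have "a - sc (s t) 1 = (a - sc (s' t) 1) + sc (s' t - s t) 1"
    by (simp add: m.scale_left_diff_distrib)
  then have "?P * ((a - sc (s t) 1) * ?R) = ?P * ((a - sc (s' t) 1) * ?R) + ?P * (sc (s' t - s t) 1 * ?R)"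
    by (simp add: algebra_simps)
  also have "?P * (sc (s' t - s t) 1 * ?R) = sc (s' t - s t) (?P * ?R)"
  proof -
    have "sc (s' t - s t) 1 * ?R = sc (s' t - s t) ?R" using ml[of _ 1 ?R] by simp
    moreover have "?P * sc (s' t - s t) ?R = sc (s' t - s t) (?P * ?R)" using mr by simp
    ultimately show ?thesis by simp
  qed
  finally show ?thesis by simp
qed

locale setting =
  fixes sc :: "complex \<Rightarrow> 'a::ring_1 \<Rightarrow> 'a"
    and A1 A2 I1 I2 :: "'a set"
    and T :: "real set"
    and tau :: "real \<Rightarrow> 'a \<Rightarrow> complex"
  assumes alg: "complex_algebra sc"
    and sub1: "unital_subalgebra sc A1"
    and sub2: "unital_subalgebra sc A2"
    and acc: "0 islimpt T"
    and lin: "\<forall>t\<in>T. linear_functional_on sc UNIV (tau t) \<and> tau t 1 = 1"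
    and id1: "ideal_of sc A1 I1"
    and id2: "ideal_of sc A2 I2"
    and free: "free_up_to_o_t sc T tau A1 A2"
    and limE: "\<And>a. a \<in> A1 \<union> A2 \<Longrightarrow> \<exists>c. Elim T (\<lambda>t. tau t a) c"
    and limD: "\<And>a. a \<in> I1 \<union> I2 \<Longrightarrow> \<exists>d. Dlim T (\<lambda>t. tau t a) d"
begin

sublocale m: module sc using alg by (simp add: complex_algebra_def)

lemma sc_ml: "sc c (x * y) = sc c x * y" and sc_mr: "sc c (x * y) = x * sc c y"
  using alg unfolding complex_algebra_def by blast+

abbreviation "F \<equiv> at (0::real) within T"

lemma tau_add: "t \<in> T \<Longrightarrow> tau t (x + y) = tau t x + tau t y"
  using lin by (auto simp: linear_functional_on_def)
lemma tau_sc: "t \<in> T \<Longrightarrow> tau t (sc c x) = c * tau t x"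
  using lin by (auto simp: linear_functional_on_def)
lemma tau_one: "t \<in> T \<Longrightarrow> tau t 1 = 1"
  using lin by auto

lemma pick_cases: "i \<in> {1, 2} \<Longrightarrow> (i = 1 \<Longrightarrow> P) \<Longrightarrow> (i = 2 \<Longrightarrow> P) \<Longrightarrow> P"
  by auto

lemma subA: "i \<in> {1,2} \<Longrightarrow> unital_subalgebra sc (pick i A1 A2)"
  using sub1 sub2 by (auto simp: pick_def)
lemma subI: "i \<in> {1,2} \<Longrightarrow> ideal_of sc (pick i A1 A2) (pick i I1 I2)"
  using id1 id2 by (auto simp: pick_def)

lemma A_mult: "i \<in> {1,2} \<Longrightarrow> a \<in> pick i A1 A2 \<Longrightarrow> b \<in> pick i A1 A2 \<Longrightarrow> a * b \<in> pick i A1 A2"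
  using subA unfolding unital_subalgebra_def by blast
lemma A_one: "i \<in> {1,2} \<Longrightarrow> 1 \<in> pick i A1 A2"
  using subA unfolding unital_subalgebra_def by blast
lemma A_cent: "i \<in> {1,2} \<Longrightarrow> a \<in> pick i A1 A2 \<Longrightarrow> a - sc c 1 \<in> pick i A1 A2"
proof -
  assume i: "i \<in> {1,2}" and a: "a \<in> pick i A1 A2"
  have "sc (- c) 1 \<in> pick i A1 A2" using subA[OF i] unfolding unital_subalgebra_def by blast
  with a subA[OF i] have "a + sc (- c) 1 \<in> pick i A1 A2" unfolding unital_subalgebra_def by blast
  then show ?thesis by simp
qed
lemma I_sub: "i \<in> {1,2} \<Longrightarrow> a \<in> pick i I1 I2 \<Longrightarrow> a \<in> pick i A1 A2"
  using subI unfolding ideal_of_def by blast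
lemma I_multl: "i \<in> {1,2} \<Longrightarrow> a \<in> pick i I1 I2 \<Longrightarrow> b \<in> pick i A1 A2 \<Longrightarrow> a * b \<in> pick i I1 I2"
  using subI unfolding ideal_of_def by blast
lemma I_multr: "i \<in> {1,2} \<Longrightarrow> a \<in> pick i A1 A2 \<Longrightarrow> b \<in> pick i I1 I2 \<Longrightarrow> a * b \<in> pick i I1 I2"
  using subI unfolding ideal_of_def by blast
lemma A_un: "i \<in> {1,2} \<Longrightarrow> a \<in> pick i A1 A2 \<Longrightarrow> a \<in> A1 \<union> A2"
  by (auto simp: pick_def split: if_splits)
lemma I_un: "i \<in> {1,2} \<Longrightarrow> a \<in> pick i I1 I2 \<Longrightarrow> a \<in> I1 \<union> I2"
  by (auto simp: pick_def split: if_splits)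

lemma tau_remove:
  "eventually (\<lambda>t. tau t (Q sc t (pre @ (i, a, s) # post)) =
     tau t (Q sc t (pre @ (i, a, s') # post)) + (s' t - s t) * tau t (Q sc t (pre @ post))) F"
  using ev_T[of T] by eventually_elim (simp only: Q_remove[OF alg, of _ pre i a s post s'] tau_add tau_sc)

definition valid :: "(nat \<times> 'a \<times> (real \<Rightarrow> complex)) list \<Rightarrow> bool" where
  "valid L \<longleftrightarrow> (\<forall>(i, a, s) \<in> set L. i \<in> {1,2} \<and> a \<in> pick i A1 A2 \<and> (\<exists>g. Elim T s g))"
definition hasI :: "(nat \<times> 'a \<times> (real \<Rightarrow> complex)) list \<Rightarrow> bool" where
  "hasI L \<longleftrightarrow> (\<exists>(i, a, s) \<in> set L. a \<in> pick i I1 I2 \<and> (\<exists>d. Dlim T s d))"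
definition goodE where "goodE L \<longleftrightarrow> (\<exists>c. Elim T (\<lambda>t. tau t (Q sc t L)) c)"
definition goodD where "goodD L \<longleftrightarrow> (\<exists>d. Dlim T (\<lambda>t. tau t (Q sc t L)) d)"
definition cnt where "cnt L = length (filter (\<lambda>(i, a, s). s \<noteq> (\<lambda>t. tau t a)) L)"

lemma valid_simps[simp]: "valid [] "
  "valid (L @ M) \<longleftrightarrow> valid L \<and> valid M"
  "valid ((i, a, s) # L) \<longleftrightarrow> (i \<in> {1,2} \<and> a \<in> pick i A1 A2 \<and> (\<exists>g. Elim T s g)) \<and> valid L"
  by (simp_all add: valid_def ball_Un)
lemma hasI_simps[simp]: "\<not> hasI [] "
  "hasI (L @ M) \<longleftrightarrow> hasI L \<or> hasI M"
  "hasI ((i, a, s) # L) \<longleftrightarrow> (a \<in> pick i I1 I2 \<and> (\<exists>d. Dlim T s d)) \<or> hasI L"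
  by (simp_all add: hasI_def bex_Un)

lemma comb_E:
  assumes "eventually (\<lambda>t. tau t (Q sc t L) = tau t (Q sc t L1) + k t * tau t (Q sc t L2)) F"
    and "goodE L1" "goodE L2" "\<exists>g. Elim T k g"
  shows "goodE L"
proof -
  obtain c1 c2 g where c1: "Elim T (\<lambda>t. tau t (Q sc t L1)) c1" and c2: "Elim T (\<lambda>t. tau t (Q sc t L2)) c2"
    and g: "Elim T k g" using assms(2-4) unfolding goodE_def by blast
  have E: "Elim T (\<lambda>t. tau t (Q sc t L1) + k t * tau t (Q sc t L2)) (c1 + g * c2)"
    by (intro Elim_add Elim_mult c1 c2 g)
  have ev: "eventually (\<lambda>t. tau t (Q sc t L1) + k t * tau t (Q sc t L2) = tau t (Q sc t L)) F"
    using assms(1) by (rule eventually_mono) simp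
  from Elim_cong[OF ev E] show ?thesis unfolding goodE_def by blast
qed

lemma comb_D:
  assumes "eventually (\<lambda>t. tau t (Q sc t L) = tau t (Q sc t L1) + k t * tau t (Q sc t L2)) F"
    and "goodD L1" "((\<exists>g. Dlim T k g) \<and> goodE L2) \<or> ((\<exists>g. Elim T k g) \<and> goodD L2)"
  shows "goodD L"
proof -
  obtain d1 where d1: "Dlim T (\<lambda>t. tau t (Q sc t L1)) d1" using assms(2) by (auto simp: goodD_def)
  obtain d2 where d2: "Dlim T (\<lambda>t. k t * tau t (Q sc t L2)) d2"
    using assms(3) unfolding goodD_def goodE_def using Dlim_mult_E E_mult_Dlim by blast
  have E: "Dlim T (\<lambda>t. tau t (Q sc t L1) + k t * tau t (Q sc t L2)) (d1 + d2)"
    by (rule Dlim_add[OF d1 d2])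
  have ev: "eventually (\<lambda>t. tau t (Q sc t L1) + k t * tau t (Q sc t L2) = tau t (Q sc t L)) F"
    using assms(1) by (rule eventually_mono) simp
  from Dlim_cong[OF ev E] show ?thesis unfolding goodD_def by blast
qed

lemma centered_Q:
  "(\<forall>(i, a, s) \<in> set L. s = (\<lambda>t. tau t a)) \<Longrightarrow>
    Q sc t L = centered_prod sc (tau t) (map (\<lambda>(i, a, s). (i, a)) L)"
  by (induction L) (auto simp: centered_prod_def)

lemma alt_case:
  assumes IH: "\<And>L'. length L' < N \<Longrightarrow> valid L' \<Longrightarrow> goodE L' \<and> (hasI L' \<longrightarrow> goodD L')"
  shows "length L = N \<Longrightarrow> alt (map fst L) \<Longrightarrow> valid L \<Longrightarrow> goodE L \<and> (hasI L \<longrightarrow> goodD L)"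
proof (induction "cnt L" arbitrary: L rule: less_induct)
  case less
  show ?case
  proof (cases "cnt L = 0")
    case True
    then have all: "\<forall>(i, a, s) \<in> set L. s = (\<lambda>t. tau t a)"
      unfolding cnt_def by (auto simp: filter_empty_conv)
    show ?thesis
    proof (cases "L = []")
      case True
      have "Elim T (\<lambda>t. tau t (Q sc t L)) 1"
        by (rule Elim_cong[OF _ Elim_const]) (use ev_T[of T] True in \<open>auto elim!: eventually_mono simp: tau_one\<close>)
      then show ?thesis using True by (auto simp: goodE_def)
    next
      case False
      let ?xs = "map (\<lambda>(i, a, s). (i, a)) L"
      have adm: "admissible A1 A2 ?xs"
        using less.prems unfolding admissible_def alternating_alt valid_def
        by (auto simp: comp_def case_prod_beta)
      have "(\<lambda>t. tau t (centered_prod sc (tau t) ?xs)) \<in> o[F](\<lambda>t. complex_of_real t)"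
        using free adm False unfolding free_up_to_o_t_def by auto
      then have "Elim T (\<lambda>t. tau t (centered_prod sc (tau t) ?xs)) 0"
        unfolding Elim_def by (auto dest: smalloD_tendsto)
      then have E: "Elim T (\<lambda>t. tau t (Q sc t L)) 0"
        using centered_Q[OF all] by simp
      then show ?thesis using E0_D[OF E] by (auto simp: goodE_def goodD_def)
    qed
  next
    case False
    define P where "P = (\<lambda>(i::nat, a, s). s \<noteq> (\<lambda>t. tau t a))"
    have "filter P L \<noteq> []" using False unfolding cnt_def P_def by (metis list.size(3))
    then have "hd (filter P L) \<in> set (filter P L)" by (rule hd_in_set)
    then have "\<exists>x\<in>set L. P x" by (simp only: set_filter mem_Collect_eq) (elim conjE, rule bexI[where x="hd (filter P L)"], assumption+)
    then have "\<exists>x\<in>set L. (\<lambda>(i, a, s). s \<noteq> (\<lambda>t. tau t a)) x" unfolding P_def .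
    from split_list_prop[OF this] obtain pre x post where L: "L = pre @ x # post" and px: "(\<lambda>(i, a, s). s \<noteq> (\<lambda>t. tau t a)) x"
      by blast
    obtain i a s where x: "x = (i, a, s)" by (cases x)
    define c where "c = (\<lambda>t. tau t a)"
    define L' where "L' = pre @ (i, a, c) # post"
    have ns: "s \<noteq> c" using px x c_def by simp
    have cnt_lt: "cnt L' < cnt L" using ns unfolding L x L'_def cnt_def c_def by simp
    have vx: "i \<in> {1,2}" "a \<in> pick i A1 A2" "\<exists>g. Elim T s g" using less.prems(3) L x by auto
    have Ec: "\<exists>g. Elim T c g" using limE[OF A_un[OF vx(1,2)]] c_def by simp
    have vL': "valid L'" using less.prems(3) vx Ec L x L'_def by auto
    have IH1: "goodE L' \<and> (hasI L' \<longrightarrow> goodD L')"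
      using less.hyps[OF cnt_lt] less.prems vL' L x L'_def by simp
    have IH2: "goodE (pre @ post) \<and> (hasI (pre @ post) \<longrightarrow> goodD (pre @ post))"
      using IH[of "pre @ post"] less.prems L x by simp
    have ev: "eventually (\<lambda>t. tau t (Q sc t L) = tau t (Q sc t L') + (c t - s t) * tau t (Q sc t (pre @ post))) F"
      unfolding L x L'_def by (rule tau_remove)
    have Ecs: "\<exists>g. Elim T (\<lambda>t. c t - s t) g" using Ec vx(3) Elim_diff by blast
    have "goodE L" by (rule comb_E[OF ev]) (use IH1 IH2 Ecs in auto)
    moreover have "goodD L" if hI: "hasI L"
    proof -
      have "hasI L'"
      proof (cases "hasI (pre @ post)")
        case True then show ?thesis unfolding L'_def by auto
      next
        case False
        then have "a \<in> pick i I1 I2" using hI L x by auto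
        then show ?thesis using limD[OF I_un[OF vx(1)]] c_def unfolding L'_def by auto
      qed
      then have "goodD L'" using IH1 by simp
      moreover have "((\<exists>g. Dlim T (\<lambda>t. c t - s t) g) \<and> goodE (pre @ post)) \<or>
          ((\<exists>g. Elim T (\<lambda>t. c t - s t) g) \<and> goodD (pre @ post))"
      proof (cases "hasI (pre @ post)")
        case True then show ?thesis using IH2 Ecs by simp
      next
        case False
        then have aI: "a \<in> pick i I1 I2" and "\<exists>d. Dlim T s d" using hI L x by auto
        then show ?thesis using limD[OF I_un[OF vx(1) aI]] c_def IH2 Dlim_diff by blast
      qed
      ultimately show ?thesis by (rule comb_D[OF ev])
    qed
    ultimately show ?thesis by blast
  qed
qed

end



context setting begin

lemma main: "valid L \<Longrightarrow> goodE L \<and> (hasI L \<longrightarrow> goodD L)"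
proof (induction "length L" arbitrary: L rule: less_induct)
  case less
  show ?case
  proof (cases "alt (map fst L)")
    case True
    show ?thesis by (rule alt_case[of "length L" L, OF less.hyps]) (use less True in simp_all)
  next
    case False
    from nonalt_split[OF False] obtain pre x y post where L: "L = pre @ x # y # post" and fxy: "fst x = fst y"
      by blast
    obtain i a s where x: "x = (i, a, s)" by (cases x)
    obtain b r where y: "y = (i, b, r)" using fxy x by (cases y) auto
    define z :: "real \<Rightarrow> complex" where "z = (\<lambda>_. 0)"
    define L1 where "L1 = pre @ (i, a, z) # y # post"
    define L2 where "L2 = pre @ y # post"
    define M2 where "M2 = pre @ (i, a, z) # post"
    define N where "N = pre @ (i, a * b, z) # post"
    have vi: "i \<in> {1,2}" "a \<in> pick i A1 A2" "b \<in> pick i A1 A2" "\<exists>g. Elim T s g" "\<exists>g. Elim T r g"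
      and vpp: "valid pre" "valid post" using less.prems L x y by auto
    have Ez: "Elim T z 0" unfolding z_def by (rule Elim_const)
    have Dz: "Dlim T z 0" unfolding z_def by (rule Dlim_zero)
    have vL2: "valid L2" "valid M2" "valid N"
      using vi vpp Ez A_mult[OF vi(1-3)] by (auto simp: L2_def M2_def N_def y)
    have len: "length L2 < length L" "length M2 < length L" "length N < length L"
      by (simp_all add: L L2_def M2_def N_def)
    have IHs: "goodE L2 \<and> (hasI L2 \<longrightarrow> goodD L2)" "goodE M2 \<and> (hasI M2 \<longrightarrow> goodD M2)"
       "goodE N \<and> (hasI N \<longrightarrow> goodD N)"
      using less.hyps[OF len(1) vL2(1)] less.hyps[OF len(2) vL2(2)] less.hyps[OF len(3) vL2(3)] by auto
    have ev1: "eventually (\<lambda>t. tau t (Q sc t L) = tau t (Q sc t L1) + (z t - s t) * tau t (Q sc t L2)) F"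
      unfolding L x L1_def L2_def by (rule tau_remove)
    have ev2: "eventually (\<lambda>t. tau t (Q sc t L1) = tau t (Q sc t N) + (z t - r t) * tau t (Q sc t M2)) F"
    proof -
      have e: "eventually (\<lambda>t. tau t (Q sc t ((pre @ [(i,a,z)]) @ (i,b,r) # post)) =
          tau t (Q sc t ((pre @ [(i,a,z)]) @ (i,b,z) # post)) + (z t - r t) * tau t (Q sc t ((pre @ [(i,a,z)]) @ post))) F"
        by (rule tau_remove)
      have q: "Q sc t ((pre @ [(i,a,z)]) @ (i,b,z) # post) = Q sc t N" for t
        by (simp add: N_def z_def mult.assoc)
      show ?thesis using e unfolding q by (simp add: L1_def M2_def y)
    qed
    have Ezs: "\<exists>g. Elim T (\<lambda>t. z t - s t) g" using Ez vi(4) Elim_diff by blast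
    have Ezr: "\<exists>g. Elim T (\<lambda>t. z t - r t) g" using Ez vi(5) Elim_diff by blast
    have gL1: "goodE L1" by (rule comb_E[OF ev2]) (use IHs Ezr in auto)
    have "goodE L" by (rule comb_E[OF ev1]) (use IHs Ezs gL1 in auto)
    moreover have "goodD L" if hI: "hasI L"
    proof -
      have hL1: "hasI L1" using hI Dz unfolding L L1_def x y by auto
      have hN: "hasI N" using hL1 Dz I_multl[OF vi(1) _ vi(3)] I_multr[OF vi(1) vi(2)]
        unfolding L1_def N_def y by auto
      have "goodD L1"
      proof (rule comb_D[OF ev2])
        show "goodD N" using IHs hN by auto
        show "((\<exists>g. Dlim T (\<lambda>t. z t - r t) g) \<and> goodE M2) \<or> ((\<exists>g. Elim T (\<lambda>t. z t - r t) g) \<and> goodD M2)"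
        proof (cases "hasI M2")
          case True then show ?thesis using IHs Ezr by auto
        next
          case False
          then obtain d where "Dlim T r d" using hL1 unfolding L1_def M2_def y by auto
          then show ?thesis using IHs Dlim_diff[OF Dz] by blast
        qed
      qed
      moreover have "((\<exists>g. Dlim T (\<lambda>t. z t - s t) g) \<and> goodE L2) \<or> ((\<exists>g. Elim T (\<lambda>t. z t - s t) g) \<and> goodD L2)"
      proof (cases "hasI L2")
        case True then show ?thesis using IHs Ezs by auto
      next
        case False
        then obtain d where "Dlim T s d" using hI unfolding L L2_def x by auto
        then show ?thesis using IHs Dlim_diff[OF Dz] by blast
      qed
      ultimately show ?thesis by (rule comb_D[OF ev1])
    qed
    ultimately show ?thesis by blast
  qed
qed

definition zl :: "(nat \<times> 'a) list \<Rightarrow> (nat \<times> 'a \<times> (real \<Rightarrow> complex)) list" where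
  "zl L = map (\<lambda>(i, a). (i, a, \<lambda>_. 0)) L"

lemma Q_zl: "Q sc t (zl L) = prod_list (map snd L)"
  by (induction L) (auto simp: zl_def)

lemma valid_zl: "\<forall>(i, a) \<in> set L. i \<in> {1,2} \<and> a \<in> pick i A1 A2 \<Longrightarrow> valid (zl L)"
  unfolding valid_def zl_def using Elim_const[of T 0] by force

lemma hasI_zl: "\<exists>(i, a) \<in> set L. a \<in> pick i I1 I2 \<Longrightarrow> hasI (zl L)"
  unfolding hasI_def zl_def using Dlim_zero[of T] by force

inductive_set Vs :: "'a set" where
  Vw: "\<forall>(i, a) \<in> set L. i \<in> {1,2} \<and> a \<in> pick i A1 A2 \<Longrightarrow> prod_list (map snd L) \<in> Vs"
| Vadd: "x \<in> Vs \<Longrightarrow> y \<in> Vs \<Longrightarrow> x + y \<in> Vs"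
| Vsc: "x \<in> Vs \<Longrightarrow> sc c x \<in> Vs"

inductive_set VIs :: "'a set" where
  VIw: "\<forall>(i, a) \<in> set L. i \<in> {1,2} \<and> a \<in> pick i A1 A2 \<Longrightarrow> \<exists>(i, a) \<in> set L. a \<in> pick i I1 I2
    \<Longrightarrow> prod_list (map snd L) \<in> VIs"
| VIadd: "x \<in> VIs \<Longrightarrow> y \<in> VIs \<Longrightarrow> x + y \<in> VIs"
| VIsc: "x \<in> VIs \<Longrightarrow> sc c x \<in> VIs"

lemma word_mult_V:
  assumes L: "\<forall>(i, a) \<in> set L. i \<in> {1,2} \<and> a \<in> pick i A1 A2"
  shows "y \<in> Vs \<Longrightarrow> prod_list (map snd L) * y \<in> Vs"
proof (induction y rule: Vs.induct)
  case (Vw M)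
  have "prod_list (map snd (L @ M)) \<in> Vs" using L Vw by (intro Vs.Vw) auto
  then show ?case by simp
next
  case (Vadd x y) then show ?case by (simp add: distrib_left Vs.Vadd)
next
  case (Vsc x c) then show ?case by (metis sc_mr Vs.Vsc)
qed

lemma Vs_mult: "x \<in> Vs \<Longrightarrow> y \<in> Vs \<Longrightarrow> x * y \<in> Vs"
proof (induction x rule: Vs.induct)
  case (Vw L) then show ?case by (rule word_mult_V)
next
  case (Vadd x1 x2) then show ?case by (simp add: distrib_right Vs.Vadd)
next
  case (Vsc x c) then show ?case by (metis sc_ml Vs.Vsc)
qed

lemma word_mult_VI:
  assumes L: "\<forall>(i, a) \<in> set L. i \<in> {1,2} \<and> a \<in> pick i A1 A2"
  shows "y \<in> VIs \<Longrightarrow> prod_list (map snd L) * y \<in> VIs \<and> y * prod_list (map snd L) \<in> VIs"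
proof (induction y rule: VIs.induct)
  case (VIw M)
  have "prod_list (map snd (L @ M)) \<in> VIs" "prod_list (map snd (M @ L)) \<in> VIs"
    using L VIw by (intro VIs.VIw; auto)+
  then show ?case by simp
next
  case (VIadd x y) then show ?case by (simp add: distrib_left distrib_right VIs.VIadd)
next
  case (VIsc x c) then show ?case by (metis sc_mr sc_ml VIs.VIsc)
qed

lemma VI_mult: "x \<in> Vs \<Longrightarrow> y \<in> VIs \<Longrightarrow> x * y \<in> VIs \<and> y * x \<in> VIs"
proof (induction x rule: Vs.induct)
  case (Vw L) then show ?case by (rule word_mult_VI)
next
  case (Vadd x1 x2) then show ?case by (simp add: distrib_right distrib_left VIs.VIadd)
next
  case (Vsc x c) then show ?case by (metis sc_ml sc_mr VIs.VIsc)
qed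

lemma single_word: "prod_list (map snd [(i, a)]) = a" by simp

lemma Vs_UNIV:
  assumes gen: "subalgebra_hull sc (A1 \<union> A2) = UNIV"
  shows "x \<in> Vs"
proof -
  have "unital_subalgebra sc Vs"
    unfolding unital_subalgebra_def
  proof (intro conjI ballI allI)
    show "1 \<in> Vs" using Vs.Vw[of "[]"] by simp
  qed (auto intro: Vs.Vadd Vs.Vsc Vs_mult)
  moreover have "A1 \<union> A2 \<subseteq> Vs"
  proof
    fix a assume "a \<in> A1 \<union> A2"
    then have "\<exists>i. i \<in> {1,2} \<and> a \<in> pick i A1 A2" by (auto simp: pick_def)
    then obtain i where "i \<in> {1,2}" "a \<in> pick i A1 A2" by blast
    then show "a \<in> Vs" using Vs.Vw[of "[(i, a)]"] by simp
  qed
  ultimately have "subalgebra_hull sc (A1 \<union> A2) \<subseteq> Vs"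
    unfolding subalgebra_hull_def by blast
  then show ?thesis using gen by auto
qed

lemma hull_VIs:
  assumes gen: "subalgebra_hull sc (A1 \<union> A2) = UNIV"
  shows "ideal_hull sc (I1 \<union> I2) \<subseteq> VIs"
proof -
  have I0: "0 \<in> pick 1 I1 I2" "0 \<in> pick 1 A1 A2" using id1 sub1 by (auto simp: pick_def ideal_of_def)
  have "ideal_of sc UNIV VIs"
    unfolding ideal_of_def
  proof (intro conjI ballI allI)
    have "sc 0 (prod_list (map snd [(1::nat, 0)])) \<in> VIs"
      by (rule VIs.VIsc, rule VIs.VIw) (use I0 in auto)
    then show "0 \<in> VIs" by simp
  qed (auto intro: VIs.VIadd VIs.VIsc VI_mult[OF Vs_UNIV[OF gen], THEN conjunct1]
      VI_mult[OF Vs_UNIV[OF gen], THEN conjunct2])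
  moreover have "I1 \<union> I2 \<subseteq> VIs"
  proof
    fix a assume "a \<in> I1 \<union> I2"
    then have "\<exists>i. i \<in> {1,2} \<and> a \<in> pick i I1 I2" by (auto simp: pick_def)
    then obtain i where "i \<in> {1,2}" "a \<in> pick i I1 I2" by blast
    then show "a \<in> VIs" using VIs.VIw[of "[(i, a)]"] I_sub by auto
  qed
  ultimately show ?thesis unfolding ideal_hull_def by blast
qed

lemma tau_add_ev: "eventually (\<lambda>t. tau t x + tau t y = tau t (x + y)) F"
  using ev_T[of T] by eventually_elim (simp add: tau_add)
lemma tau_sc_ev: "eventually (\<lambda>t. c * tau t x = tau t (sc c x)) F"
  using ev_T[of T] by eventually_elim (simp add: tau_sc)

lemma Vs_E: "x \<in> Vs \<Longrightarrow> \<exists>c. Elim T (\<lambda>t. tau t x) c"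
proof (induction x rule: Vs.induct)
  case (Vw L)
  from main[OF valid_zl[OF Vw]] show ?case by (simp add: goodE_def Q_zl)
next
  case (Vadd x y)
  then obtain c d where "Elim T (\<lambda>t. tau t x) c" "Elim T (\<lambda>t. tau t y) d" by blast
  from Elim_cong[OF tau_add_ev Elim_add[OF this]] show ?case by blast
next
  case (Vsc x c)
  then obtain d where "Elim T (\<lambda>t. tau t x) d" by blast
  from Elim_cong[OF tau_sc_ev Elim_cmult[OF this]] show ?case by blast
qed

lemma VIs_D: "x \<in> VIs \<Longrightarrow> \<exists>c. Dlim T (\<lambda>t. tau t x) c"
proof (induction x rule: VIs.induct)
  case (VIw L)
  from main[OF valid_zl[OF VIw(1)]] hasI_zl[OF VIw(2)] show ?case by (simp add: goodD_def Q_zl)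
next
  case (VIadd x y)
  then obtain c d where "Dlim T (\<lambda>t. tau t x) c" "Dlim T (\<lambda>t. tau t y) d" by blast
  from Dlim_cong[OF tau_add_ev Dlim_add[OF this]] show ?case by blast
next
  case (VIsc x c)
  then obtain d where "Dlim T (\<lambda>t. tau t x) d" by blast
  from Dlim_cong[OF tau_sc_ev Dlim_cmult[OF this]] show ?case by blast
qed

definition RR :: "(nat \<times> 'a \<times> (real \<Rightarrow> complex)) \<Rightarrow> (nat \<times> 'a \<times> (real \<Rightarrow> complex)) \<Rightarrow> bool" where
  "RR x y \<longleftrightarrow> fst x = fst y \<and> fst (snd x) = fst (snd y) \<and>
     (\<exists>g. Elim T (snd (snd x)) g \<and> Elim T (snd (snd y)) g)"

lemma cont: "list_all2 RR L L' \<Longrightarrow> valid pre \<Longrightarrow> valid L \<Longrightarrow>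
  Elim T (\<lambda>t. tau t (Q sc t (pre @ L)) - tau t (Q sc t (pre @ L'))) 0"
proof (induction L arbitrary: pre L')
  case Nil then show ?case using Elim_const[of T 0] by simp
next
  case (Cons x L1)
  obtain x' L1' where L': "L' = x' # L1'" and Rx: "RR x x'" and R1: "list_all2 RR L1 L1'"
    using Cons.prems(1) by (cases L') auto
  obtain i a s where x: "x = (i, a, s)" by (cases x)
  obtain r g where x': "x' = (i, a, r)" and g: "Elim T s g" "Elim T r g"
    using Rx x unfolding RR_def by (cases x') auto
  have vx: "i \<in> {1,2}" "a \<in> pick i A1 A2" using Cons.prems x by auto
  have ev: "eventually (\<lambda>t. tau t (Q sc t (pre @ (i, a, s) # L1)) =
     tau t (Q sc t (pre @ (i, a, r) # L1)) + (r t - s t) * tau t (Q sc t (pre @ L1))) F"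
    by (rule tau_remove)
  have "goodE (pre @ L1)" using main[of "pre @ L1"] Cons.prems x by simp
  then obtain c where c: "Elim T (\<lambda>t. tau t (Q sc t (pre @ L1))) c" unfolding goodE_def by blast
  have E1: "Elim T (\<lambda>t. (r t - s t) * tau t (Q sc t (pre @ L1))) 0"
    using Elim_mult[OF Elim_diff[OF g(2) g(1)] c] by simp
  have E2: "Elim T (\<lambda>t. tau t (Q sc t ((pre @ [(i, a, r)]) @ L1)) - tau t (Q sc t ((pre @ [(i, a, r)]) @ L1'))) 0"
  proof (rule Cons.IH[OF R1])
    show "valid (pre @ [(i, a, r)])" using Cons.prems g vx by auto
    show "valid L1" using Cons.prems x by simp
  qed
  have E3: "Elim T (\<lambda>t. (r t - s t) * tau t (Q sc t (pre @ L1)) +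
     (tau t (Q sc t ((pre @ [(i, a, r)]) @ L1)) - tau t (Q sc t ((pre @ [(i, a, r)]) @ L1')))) 0"
    using Elim_add[OF E1 E2] by simp
  have ev3: "eventually (\<lambda>t. (r t - s t) * tau t (Q sc t (pre @ L1)) +
     (tau t (Q sc t ((pre @ [(i, a, r)]) @ L1)) - tau t (Q sc t ((pre @ [(i, a, r)]) @ L1'))) =
     tau t (Q sc t (pre @ x # L1)) - tau t (Q sc t (pre @ x' # L1'))) F"
    using ev unfolding x x' by (rule eventually_mono) simp
  from Elim_cong[OF ev3 E3] show ?case unfolding L' .
qed

end



lemma smallo_Elim: "(\<lambda>t. f t - c) \<in> o[at 0 within T](\<lambda>t. complex_of_real t) \<Longrightarrow> Elim T f c"
  unfolding Elim_def by (drule smalloD_tendsto) simp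

lemma smallo_Dlim:
  assumes "(\<lambda>t. f t - complex_of_real t * d) \<in> o[at 0 within T](\<lambda>t. complex_of_real t)"
  shows "Dlim T f d"
proof -
  have "((\<lambda>t. (f t - complex_of_real t * d) / complex_of_real t + d) \<longlongrightarrow> 0 + d) (at 0 within T)"
    using smalloD_tendsto[OF assms] by (intro tendsto_intros)
  moreover have "eventually (\<lambda>t. (f t - complex_of_real t * d) / complex_of_real t + d = f t / complex_of_real t) (at 0 within T)"
    using ev_nz[of T] by eventually_elim (simp add: diff_divide_distrib)
  ultimately show ?thesis unfolding Dlim_def by (simp add: tendsto_cong)
qed

lemma Dlim_smallo:
  assumes "Dlim T f d"
  shows "(\<lambda>t. f t - complex_of_real t * d) \<in> o[at 0 within T](\<lambda>t. complex_of_real t)"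
proof (rule smalloI_tendsto)
  have "((\<lambda>t. f t / complex_of_real t - d) \<longlongrightarrow> d - d) (at 0 within T)"
    using assms unfolding Dlim_def by (intro tendsto_intros)
  moreover have "eventually (\<lambda>t. f t / complex_of_real t - d = (f t - complex_of_real t * d) / complex_of_real t) (at 0 within T)"
    using ev_nz[of T] by eventually_elim (simp add: diff_divide_distrib)
  ultimately show "((\<lambda>t. (f t - complex_of_real t * d) / complex_of_real t) \<longlongrightarrow> 0) (at 0 within T)"
    by (simp add: tendsto_cong)
  show "eventually (\<lambda>t. complex_of_real t \<noteq> 0) (at 0 within T)"
    using ev_nz[of T] by eventually_elim simp
qed

lemma Elim_smallo1:
  assumes "Elim T f c"
  shows "(\<lambda>t. f t - c) \<in> o[at 0 within T](\<lambda>t. 1)"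
proof (rule smalloI_tendsto)
  have "((\<lambda>t. f t - c) \<longlongrightarrow> c - c) (at 0 within T)"
    using Elim_tendsto[OF assms] by (intro tendsto_intros)
  then show "((\<lambda>t. (f t - c) / 1) \<longlongrightarrow> 0) (at 0 within T)" by simp
qed simp

lemma alt_last2: "alt (xs @ [u, v]) \<Longrightarrow> u \<noteq> v"
  using alt_append[of xs u "[v]"] by simp

lemma list_all2_mapI: "(\<And>x. x \<in> set xs \<Longrightarrow> P (f x) (g x)) \<Longrightarrow> list_all2 P (map f xs) (map g xs)"
  by (induction xs) auto

context setting begin

lemma tau_diff: "t \<in> T \<Longrightarrow> tau t (x - y) = tau t x - tau t y"
proof -
  assume t: "t \<in> T"
  have "x - y = x + sc (-1) y" by simp
  then show ?thesis using t by (simp only: tau_add tau_sc) simp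
qed

lemma free_lemma:
  assumes lf: "linear_functional_on sc UNIV phi" and p1: "phi 1 = 1" and fw: "free_wrt sc phi A1 A2"
  shows "(\<forall>(i, a) \<in> set as. i \<in> {1,2} \<and> a \<in> pick i A1 A2 \<and> phi a = 0) \<Longrightarrow>
    (\<forall>(j, b) \<in> set bs. j \<in> {1,2} \<and> b \<in> pick j A1 A2 \<and> phi b = 0) \<Longrightarrow>
    alt (rev (map fst as)) \<Longrightarrow> alt (map fst bs) \<Longrightarrow>
    (as \<noteq> [] \<longrightarrow> bs \<noteq> [] \<longrightarrow> fst (hd as) = fst (hd bs)) \<Longrightarrow>
    phi (prod_list (rev (map snd as)) * prod_list (map snd bs)) =
      (if map fst as = map fst bs then (\<Prod>(a, b) \<leftarrow> zip (map snd as) (map snd bs). phi (a * b)) else 0)"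
proof (induction as arbitrary: bs)
  have padd: "phi (x + y) = phi x + phi y" for x y using lf by (simp add: linear_functional_on_def)
  have psc: "phi (sc c x) = c * phi x" for c x using lf by (simp add: linear_functional_on_def)
  have pdiff: "phi (x - y) = phi x - phi y" for x y
  proof -
    have "x - y = x + sc (-1) y" by simp
    then show ?thesis by (simp only: padd psc) simp
  qed
  have cp: "centered_prod sc phi xs = prod_list (map snd xs)" if "\<forall>(i, a) \<in> set xs. phi a = 0" for xs
    using that by (induction xs) (auto simp: centered_prod_def)
  have fz: "phi (prod_list (map snd xs)) = 0" if "xs \<noteq> []"
    "\<forall>(i, a) \<in> set xs. i \<in> {1,2} \<and> a \<in> pick i A1 A2 \<and> phi a = 0" "alt (map fst xs)" for xs
  proof -
    have "admissible A1 A2 xs" using that unfolding admissible_def alternating_alt by auto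
    then have "phi (centered_prod sc phi xs) = 0" using fw that(1) unfolding free_wrt_def by blast
    moreover have "centered_prod sc phi xs = prod_list (map snd xs)" by (rule cp) (use that(2) in auto)
    ultimately show ?thesis by simp
  qed
  {
    case Nil
    show ?case
    proof (cases bs)
      case Nil then show ?thesis using p1 by simp
    next
      case (Cons b bs')
      then show ?thesis using fz[of bs] Nil.prems by simp
    qed
  next
    case (Cons x as')
    obtain i a where x: "x = (i, a)" by (cases x)
    show ?case
    proof (cases bs)
      case Nil
      have "phi (prod_list (map snd (rev (x # as')))) = 0"
        by (rule fz) (use Cons.prems in \<open>auto simp: rev_map\<close>)
      then show ?thesis using Nil by (simp add: rev_map)
    next
      case (Cons y bs')
      obtain j b where y: "y = (j, b)" by (cases y)
      have ij: "i = j" using Cons.prems(5) x y Cons by simp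
      have vi: "i \<in> {1,2}" "a \<in> pick i A1 A2" "b \<in> pick i A1 A2"
        using Cons.prems(1,2) x y Cons ij by auto
      define c where "c = phi (a * b)"
      define ab where "ab = a * b - sc c 1"
      define P where "P = prod_list (rev (map snd as'))"
      define B where "B = prod_list (map snd bs')"
      have W: "prod_list (rev (map snd (x # as'))) * prod_list (map snd bs) = P * ab * B + sc c (P * B)"
      proof -
        have "prod_list (rev (map snd (x # as'))) * prod_list (map snd bs) = P * (a * b) * B"
          by (simp add: P_def B_def x y Cons mult.assoc)
        also have "a * b = ab + sc c 1" by (simp add: ab_def)
        also have "P * (ab + sc c 1) * B = P * ab * B + P * sc c 1 * B" by (simp add: algebra_simps)
        also have "P * sc c 1 * B = sc c (P * B)" by (metis mult.right_neutral sc_ml sc_mr)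
        finally show ?thesis .
      qed
      have phab: "phi ab = 0" unfolding ab_def c_def by (simp add: pdiff psc p1)
      have abA: "ab \<in> pick i A1 A2" unfolding ab_def by (rule A_cent[OF vi(1) A_mult[OF vi]])
      have alt1: "alt (rev (map fst as') @ [i])" using Cons.prems(3) x by simp
      have alt2: "alt (i # map fst bs')" using Cons.prems(4) y Cons ij by simp
      have "phi (prod_list (map snd (rev as' @ (i, ab) # bs'))) = 0"
      proof (rule fz)
        show "alt (map fst (rev as' @ (i, ab) # bs'))"
          using alt_append[of "rev (map fst as')" i "map fst bs'"] alt1 alt2 by (simp add: rev_map)
        show "\<forall>(i, a)\<in>set (rev as' @ (i, ab) # bs'). i \<in> {1, 2} \<and> a \<in> pick i A1 A2 \<and> phi a = 0"
          using Cons.prems(1,2) Cons vi abA phab by auto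
      qed simp
      then have z: "phi (P * ab * B) = 0" by (simp add: P_def B_def rev_map mult.assoc)
      have hd': "as' \<noteq> [] \<longrightarrow> bs' \<noteq> [] \<longrightarrow> fst (hd as') = fst (hd bs')"
      proof (intro impI)
        assume ne: "as' \<noteq> []" "bs' \<noteq> []"
        then obtain x2 as'' y2 bs'' where a2: "as' = x2 # as''" and b2: "bs' = y2 # bs''"
          by (metis list.exhaust)
        have "fst x2 \<noteq> i" using alt1 a2 alt_last2[of "rev (map fst as'')" "fst x2" i] by simp
        moreover have "fst y2 \<noteq> i" using alt2 b2 by simp
        moreover have "fst x2 \<in> {1,2}" "fst y2 \<in> {1,2}"
          using Cons.prems(1,2) a2 b2 Cons by (auto split: prod.splits)
        ultimately show "fst (hd as') = fst (hd bs')" using a2 b2 vi(1) by auto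
      qed
      have IH: "phi (P * B) = (if map fst as' = map fst bs' then (\<Prod>(a, b) \<leftarrow> zip (map snd as') (map snd bs'). phi (a * b)) else 0)"
        unfolding P_def B_def
      proof (rule Cons.IH)
        show "\<forall>(i, a)\<in>set as'. i \<in> {1, 2} \<and> a \<in> pick i A1 A2 \<and> phi a = 0" using Cons.prems(1) by auto
        show "\<forall>(j, b)\<in>set bs'. j \<in> {1, 2} \<and> b \<in> pick j A1 A2 \<and> phi b = 0" using Cons.prems(2) Cons by auto
        show "alt (rev (map fst as'))" using alt1 by (rule alt_snocD)
        show "alt (map fst bs')" using alt2 by (rule alt_ConsD)
      qed (rule hd')
      have "phi (prod_list (rev (map snd (x # as'))) * prod_list (map snd bs)) = c * phi (P * B)"
        unfolding W padd psc z by simp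
      then show ?thesis using IH by (simp add: x y Cons ij c_def)
    qed
  }
qed

context
  assumes gen: "subalgebra_hull sc (A1 \<union> A2) = UNIV"
begin

definition phi where "phi x = (SOME c. Elim T (\<lambda>t. tau t x) c)"
definition phi' where "phi' x = (SOME d. Dlim T (\<lambda>t. tau t x) d)"

lemma phi_E: "Elim T (\<lambda>t. tau t x) (phi x)"
  unfolding phi_def by (rule someI_ex, rule Vs_E, rule Vs_UNIV[OF gen])

lemma phi_eq: "Elim T (\<lambda>t. tau t x) c \<Longrightarrow> phi x = c"
  using Elim_unique[OF acc phi_E] by blast

lemma phi_E0: "phi a = 0 \<Longrightarrow> Elim T (\<lambda>t. tau t a) 0"
  using phi_E[of a] by simp

lemma phi'_D: "\<exists>d. Dlim T (\<lambda>t. tau t x) d \<Longrightarrow> Dlim T (\<lambda>t. tau t x) (phi' x)"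
  unfolding phi'_def by (rule someI_ex)

lemma phi'_eq: "Dlim T (\<lambda>t. tau t x) d \<Longrightarrow> phi' x = d"
  using Dlim_unique[OF acc phi'_D] by blast

lemma phi_lin: "linear_functional_on sc UNIV phi"
  unfolding linear_functional_on_def
proof (intro conjI ballI allI)
  fix x y show "phi (x + y) = phi x + phi y"
    by (rule phi_eq, rule Elim_cong[OF tau_add_ev Elim_add[OF phi_E phi_E]])
next
  fix c x show "phi (sc c x) = c * phi x"
    by (rule phi_eq, rule Elim_cong[OF tau_sc_ev Elim_cmult[OF phi_E]])
qed

lemma phi_one: "phi 1 = 1"
proof (rule phi_eq)
  show "Elim T (\<lambda>t. tau t 1) 1"
    by (rule Elim_cong[OF _ Elim_const]) (use ev_T[of T] in \<open>auto elim!: eventually_mono simp: tau_one\<close>)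
qed

lemma phi'_lin: "linear_functional_on sc (ideal_hull sc (I1 \<union> I2)) phi'"
  unfolding linear_functional_on_def
proof (intro conjI ballI allI)
  fix x y assume "x \<in> ideal_hull sc (I1 \<union> I2)" "y \<in> ideal_hull sc (I1 \<union> I2)"
  then have "Dlim T (\<lambda>t. tau t x) (phi' x)" "Dlim T (\<lambda>t. tau t y) (phi' y)"
    using hull_VIs[OF gen] VIs_D phi'_D by blast+
  then show "phi' (x + y) = phi' x + phi' y"
    by (intro phi'_eq Dlim_cong[OF tau_add_ev Dlim_add])
next
  fix c x assume "x \<in> ideal_hull sc (I1 \<union> I2)"
  then have "Dlim T (\<lambda>t. tau t x) (phi' x)"
    using hull_VIs[OF gen] VIs_D phi'_D by blast+
  then show "phi' (sc c x) = c * phi' x"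
    by (intro phi'_eq Dlim_cong[OF tau_sc_ev Dlim_cmult])
qed

lemma Q_cent: "Q sc t (map (\<lambda>(i, a). (i, a, f a)) xs) = centered_prod sc (\<lambda>a. f a t) xs"
  by (induction xs) (auto simp: centered_prod_def)

lemma free_Elim:
  assumes "xs \<noteq> []" "admissible A1 A2 xs"
  shows "Elim T (\<lambda>t. tau t (Q sc t (map (\<lambda>(i, a). (i, a, \<lambda>t. tau t a)) xs))) 0"
proof -
  have "(\<lambda>t. tau t (centered_prod sc (tau t) xs)) \<in> o[F](\<lambda>t. complex_of_real t)"
    using free assms unfolding free_up_to_o_t_def by auto
  then have "Elim T (\<lambda>t. tau t (centered_prod sc (tau t) xs)) 0"
    by (intro smallo_Elim) simp
  then show ?thesis by (simp add: Q_cent[where f="\<lambda>a t. tau t a"])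
qed

lemma valid_adm: "admissible A1 A2 xs \<Longrightarrow> (\<And>a. \<exists>g. Elim T (f a) g) \<Longrightarrow> valid (map (\<lambda>(i, a). (i, a, f a)) xs)"
  unfolding admissible_def valid_def by auto

lemma phi_free: "free_wrt sc phi A1 A2"
  unfolding free_wrt_def
proof (intro allI impI, elim conjE)
  fix xs :: "(nat \<times> 'a) list" assume ne: "xs \<noteq> []" and adm: "admissible A1 A2 xs"
  let ?Lp = "map (\<lambda>(i, a). (i, a, \<lambda>_. phi a)) xs"
  let ?Lc = "map (\<lambda>(i, a). (i, a, \<lambda>t. tau t a)) xs"
  have R: "list_all2 RR ?Lp ?Lc"
    by (rule list_all2_mapI) (auto simp: RR_def intro!: exI conjI Elim_const phi_E)
  have E1: "Elim T (\<lambda>t. tau t (Q sc t ([] @ ?Lp)) - tau t (Q sc t ([] @ ?Lc))) 0"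
    by (rule cont[OF R]) (auto intro!: valid_adm[OF adm] Elim_const)
  have E2: "Elim T (\<lambda>t. tau t (Q sc t ?Lc)) 0" by (rule free_Elim[OF ne adm])
  have "Elim T (\<lambda>t. (tau t (Q sc t ([] @ ?Lp)) - tau t (Q sc t ([] @ ?Lc))) + tau t (Q sc t ?Lc)) (0 + 0)"
    by (rule Elim_add[OF E1 E2])
  then have "Elim T (\<lambda>t. tau t (centered_prod sc phi xs)) 0"
    using Q_cent[where f="\<lambda>a _. phi a" and xs=xs] by simp
  then show "phi (centered_prod sc phi xs) = 0" by (rule phi_eq)
qed

lemma typeB:
  assumes h: "h \<in> {1, 2}" "v \<in> pick h I1 I2"
    and as: "\<forall>(i, a) \<in> set as. i \<in> {1, 2} \<and> a \<in> pick i A1 A2 \<and> phi a = 0"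
    and bs: "\<forall>(j, b) \<in> set bs. j \<in> {1, 2} \<and> b \<in> pick j A1 A2 \<and> phi b = 0"
    and alt0: "alternating (rev (map fst as) @ [h] @ map fst bs)"
  shows "phi' (prod_list (rev (map snd as)) * v * prod_list (map snd bs)) =
          (if map fst as = map fst bs
           then (\<Prod>(a, b) \<leftarrow> zip (map snd as) (map snd bs). phi (a * b)) * phi' v
           else 0)"
proof -
  define P where "P = prod_list (rev (map snd as))"
  define B where "B = prod_list (map snd bs)"
  define tv where "tv = (\<lambda>t. tau t v)"
  define z :: "real \<Rightarrow> complex" where "z = (\<lambda>_. 0)"
  define xs where "xs = rev as @ (h, v) # bs"
  let ?Lc = "map (\<lambda>(i, a). (i, a, \<lambda>t. tau t a)) xs"
  let ?L = "zl (rev as) @ (h, v, tv) # zl bs"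
  have alt: "alt (rev (map fst as) @ h # map fst bs)" using alt0 by (simp add: alternating_alt)
  have vA: "v \<in> pick h A1 A2" by (rule I_sub[OF h])
  have adm: "admissible A1 A2 xs"
    using as bs h vA alt unfolding admissible_def xs_def alternating_alt by (auto simp: rev_map)
  have ev: "eventually (\<lambda>t. tau t (Q sc t (zl (rev as) @ (h, v, z) # zl bs)) =
     tau t (Q sc t ?L) + (tv t - z t) * tau t (Q sc t (zl (rev as) @ zl bs))) F"
    by (rule tau_remove)
  have q1: "Q sc t (zl (rev as) @ (h, v, z) # zl bs) = P * v * B" for t
    by (simp add: Q_zl P_def B_def z_def rev_map mult.assoc)
  have q2: "Q sc t (zl (rev as) @ zl bs) = P * B" for t
    by (simp add: Q_zl P_def B_def rev_map)
  have R1: "list_all2 RR (map (\<lambda>(i, a). (i, a, \<lambda>_. 0)) (rev as)) (map (\<lambda>(i, a). (i, a, \<lambda>t. tau t a)) (rev as))"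
    proof (rule list_all2_mapI)
      fix x assume "x \<in> set (rev as)"
      then obtain i a where "x = (i, a)" "phi a = 0" using as by (cases x) auto
      then show "RR (case x of (i, a) \<Rightarrow> (i, a, \<lambda>_. 0)) (case x of (i, a) \<Rightarrow> (i, a, \<lambda>t. tau t a))"
        unfolding RR_def using Elim_const[of T 0] phi_E0 by auto
    qed
  have R2: "list_all2 RR (map (\<lambda>(i, a). (i, a, \<lambda>_. 0)) bs) (map (\<lambda>(i, a). (i, a, \<lambda>t. tau t a)) bs)"
    proof (rule list_all2_mapI)
      fix x assume "x \<in> set bs"
      then obtain i a where "x = (i, a)" "phi a = 0" using bs by (cases x) auto
      then show "RR (case x of (i, a) \<Rightarrow> (i, a, \<lambda>_. 0)) (case x of (i, a) \<Rightarrow> (i, a, \<lambda>t. tau t a))"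
        unfolding RR_def using Elim_const[of T 0] phi_E0 by auto
    qed
  have R3: "RR (h, v, tv) (h, v, \<lambda>t. tau t v)"
      using phi_E[of v] by (auto simp: RR_def tv_def)
  have R: "list_all2 RR ?L ?Lc"
    unfolding xs_def zl_def using R1 R2 R3 by (auto intro!: list_all2_appendI)
  have vL: "valid ?L"
  proof -
    have "valid (zl (rev as))" "valid (zl bs)"
      by (rule valid_zl, use as bs in auto)+
    then show ?thesis using h vA phi_E[of v] by (auto simp: tv_def)
  qed
  have E1: "Elim T (\<lambda>t. tau t (Q sc t ?L) - tau t (Q sc t ?Lc)) 0"
    using cont[OF R, of "[]"] vL by simp
  have E2: "Elim T (\<lambda>t. tau t (Q sc t ?Lc)) 0"
    by (rule free_Elim[OF _ adm]) (simp add: xs_def)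
  have D0: "Dlim T (\<lambda>t. (tau t (Q sc t ?L) - tau t (Q sc t ?Lc)) + tau t (Q sc t ?Lc)) 0"
  proof -
    have "Elim T (\<lambda>t. (tau t (Q sc t ?L) - tau t (Q sc t ?Lc)) + tau t (Q sc t ?Lc)) (0 + 0)"
      by (rule Elim_add[OF E1 E2])
    then show ?thesis by (intro E0_D) simp
  qed
  have Dv: "Dlim T tv (phi' v)" unfolding tv_def
    by (rule phi'_D, rule limD, rule I_un[OF h])
  have D1: "Dlim T (\<lambda>t. (tv t - z t) * tau t (P * B)) (phi' v * phi (P * B))"
    by (rule Dlim_mult_E[OF _ phi_E]) (simp add: z_def Dv)
  have D2: "Dlim T (\<lambda>t. ((tau t (Q sc t ?L) - tau t (Q sc t ?Lc)) + tau t (Q sc t ?Lc)) + (tv t - z t) * tau t (P * B))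
      (0 + phi' v * phi (P * B))"
    by (rule Dlim_add[OF D0 D1])
  have ev2: "eventually (\<lambda>t. ((tau t (Q sc t ?L) - tau t (Q sc t ?Lc)) + tau t (Q sc t ?Lc)) + (tv t - z t) * tau t (P * B)
      = tau t (P * v * B)) F"
    using ev unfolding q1 q2 by (rule eventually_mono) simp
  have "phi' (P * v * B) = phi' v * phi (P * B)"
    using phi'_eq[OF Dlim_cong[OF ev2 D2]] by simp
  moreover have "phi (P * B) = (if map fst as = map fst bs
           then (\<Prod>(a, b) \<leftarrow> zip (map snd as) (map snd bs). phi (a * b)) else 0)"
    unfolding P_def B_def
  proof (rule free_lemma[OF phi_lin phi_one phi_free as bs])
    have a1: "alt (rev (map fst as) @ [h])" and a2: "alt (h # map fst bs)"
      using alt alt_append by blast+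
    show "alt (rev (map fst as))" by (rule alt_snocD[OF a1])
    show "alt (map fst bs)" by (rule alt_ConsD[OF a2])
    show "as \<noteq> [] \<longrightarrow> bs \<noteq> [] \<longrightarrow> fst (hd as) = fst (hd bs)"
    proof (intro impI)
      assume "as \<noteq> []" "bs \<noteq> []"
      then obtain x2 as'' y2 bs'' where a2': "as = x2 # as''" and b2: "bs = y2 # bs''"
        by (metis list.exhaust)
      have "fst x2 \<noteq> h" using a1 a2' alt_last2[of "rev (map fst as'')" "fst x2" h] by simp
      moreover have "fst y2 \<noteq> h" using a2 b2 by simp
      moreover have "fst x2 \<in> {1,2}" "fst y2 \<in> {1,2}"
        using as bs a2' b2 by (auto split: prod.splits)
      ultimately show "fst (hd as) = fst (hd bs)" using a2' b2 h(1) by auto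
    qed
  qed
  ultimately show ?thesis by (simp add: P_def B_def mult.commute)
qed

end

end


theorem proposition2p9:
  fixes sc :: "complex \<Rightarrow> 'a::ring_1 \<Rightarrow> 'a"
    and A1 A2 I1 I2 :: "'a set"
    and T :: "real set"
    and tau :: "real \<Rightarrow> 'a \<Rightarrow> complex"
    and tau0 :: "'a \<Rightarrow> complex"
    and tau' :: "'a \<Rightarrow> complex"
  assumes alg: "complex_algebra sc"
    and sub1: "unital_subalgebra sc A1"
    and sub2: "unital_subalgebra sc A2"
    and gen: "subalgebra_hull sc (A1 \<union> A2) = UNIV"
    and acc: "0 islimpt T"
    and lin: "\<forall>t\<in>T. linear_functional_on sc UNIV (tau t) \<and> tau t 1 = 1"
    and id1: "ideal_of sc A1 I1"
    and id2: "ideal_of sc A2 I2"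
    and free: "free_up_to_o_t sc T tau A1 A2"
    and lim0: "\<forall>a \<in> A1 \<union> A2.
                 (\<lambda>t. tau t a - tau0 a) \<in> o[at 0 within T](\<lambda>t. complex_of_real t)"
    and lim1: "\<forall>a \<in> I1 \<union> I2.
                 (\<lambda>t. tau t a - complex_of_real t * tau' a) \<in> o[at 0 within T](\<lambda>t. complex_of_real t)"
  shows "\<exists>phi phi'.
           linear_functional_on sc UNIV phi \<and> (\<forall>a \<in> A1 \<union> A2. phi a = tau0 a) \<and>
           linear_functional_on sc (ideal_hull sc (I1 \<union> I2)) phi' \<and>
           (\<forall>a \<in> I1 \<union> I2. phi' a = tau' a) \<and>
           (\<forall>a. (\<lambda>t. tau t a - phi a) \<in> o[at 0 within T](\<lambda>t. 1)) \<and>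
           (\<forall>a \<in> ideal_hull sc (I1 \<union> I2).
              (\<lambda>t. tau t a - complex_of_real t * phi' a) \<in> o[at 0 within T](\<lambda>t. complex_of_real t)) \<and>
           free_type_B sc phi phi' A1 I1 A2 I2"
proof -
  have limE': "\<exists>c. Elim T (\<lambda>t. tau t a) c" if "a \<in> A1 \<union> A2" for a
  proof -
    have "Elim T (\<lambda>t. tau t a) (tau0 a)" by (rule smallo_Elim) (use lim0 that in blast)
    then show ?thesis by blast
  qed
  have limD': "\<exists>d. Dlim T (\<lambda>t. tau t a) d" if "a \<in> I1 \<union> I2" for a
  proof -
    have "Dlim T (\<lambda>t. tau t a) (tau' a)" by (rule smallo_Dlim) (use lim1 that in blast)
    then show ?thesis by blast
  qed
  interpret S: setting sc A1 A2 I1 I2 T tau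
    using alg sub1 sub2 acc lin id1 id2 free limE' limD' by (simp add: setting_def)
  show ?thesis
  proof (rule exI[of _ S.phi], rule exI[of _ S.phi'], intro conjI ballI allI)
    show "linear_functional_on sc UNIV S.phi" by (rule S.phi_lin[OF gen])
    show "linear_functional_on sc (ideal_hull sc (I1 \<union> I2)) S.phi'" by (rule S.phi'_lin[OF gen])
    fix a
    show "a \<in> A1 \<union> A2 \<Longrightarrow> S.phi a = tau0 a"
      by (rule S.phi_eq[OF gen], rule smallo_Elim) (use lim0 in blast)
    show "a \<in> I1 \<union> I2 \<Longrightarrow> S.phi' a = tau' a"
      by (rule S.phi'_eq[OF gen], rule smallo_Dlim) (use lim1 in blast)
    show "(\<lambda>t. tau t a - S.phi a) \<in> o[at 0 within T](\<lambda>t. 1)"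
      by (rule Elim_smallo1[OF S.phi_E[OF gen]])
    show "a \<in> ideal_hull sc (I1 \<union> I2) \<Longrightarrow>
      (\<lambda>t. tau t a - complex_of_real t * S.phi' a) \<in> o[at 0 within T](\<lambda>t. complex_of_real t)"
      by (rule Dlim_smallo, rule S.phi'_D[OF gen], rule S.VIs_D) (use S.hull_VIs[OF gen] in blast)
  next
    show "free_type_B sc S.phi S.phi' A1 I1 A2 I2"
      unfolding free_type_B_def
    proof (intro conjI allI impI)
      show "free_wrt sc S.phi A1 A2" by (rule S.phi_free[OF gen])
    next
      fix as bs h v
      assume "h \<in> {1, 2} \<and> v \<in> pick h I1 I2 \<and>
        (\<forall>(i, a)\<in>set as. i \<in> {1, 2} \<and> a \<in> pick i A1 A2 \<and> S.phi a = 0) \<and>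
        (\<forall>(j, b)\<in>set bs. j \<in> {1, 2} \<and> b \<in> pick j A1 A2 \<and> S.phi b = 0) \<and>
        alternating (rev (map fst as) @ [h] @ map fst bs)"
      then show "S.phi' (prod_list (rev (map snd as)) * v * prod_list (map snd bs)) =
          (if map fst as = map fst bs
           then (\<Prod>(a, b) \<leftarrow> zip (map snd as) (map snd bs). S.phi (a * b)) * S.phi' v
           else 0)"
        using S.typeB[OF gen] by blast
    qed
  qed
qed

end
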